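(* For a lightlike hypersurface $V^3$ of a $4$-dimensional manifold $(M,c)$ with conformal structure of Lorentzian signature $(3,1)$, without umbilical points, the affinor $H^a_b$ is proportional to the Burali-Forti affinor: $H^a_b=\frac{\nu}{2\mu}h^a_b$. Consequently $H^a_b\equiv0$ at a point exactly when $h^a_b=0$ or $\nu=0$. Moreover, in any dimension $n\ge4$, $H^a_b$ is trace-free, is a relative tensor of weight $2$, and is diagonalizable simultaneously with $g_{ab}$ and $h^a_b$, with eigenvalues $H_a=h_a^2+\frac{\nu}{2\mu}h_a-\mu$ where $h_a$ are the eigenvalues of $h^a_b$.
   Context: Setup: $(M,c)$ smooth $n$-manifold with conformal structure of signature $(n-1,1)$, tangent conformal space modeled by hyperquadric $Q^n_1\subset P^{n+1}$ with moving frames, $dA_0=\omega^0_0A_0+\omega^iA_i$, $dA_i=\omega^0_iA_0+\omega^j_iA_j+\omega^{n+1}_iA_{n+1}$. For a lightlike hypersurface $V$ (tangent at each $x$ to the isotropic cone $C_x$): adapted frames $A_0=x$, $A_1$ on the isotropic generator touched by $T_xV$, $A_n$ isotropic outside $T_xV$, $A_a$ ($a=2,\dots,n-1$), $(A_1,A_n)=-1$, $(A_a,A_b)=g_{ab}$ positive definite; $V$: $\omega^n=0$, $\omega^n_a=\lambda_{ab}\omega^b$ ($\lambda_{ab}$ symmetric), $\lambda^a_b=g^{ac}\lambda_{cb}$, $\lambda=\frac1{n-2}\lambda^a_a$; Burali-Forti affinor $h^a_b=\lambda^a_b-\lambda\delta^a_b$ (trace-free, self-adjoint w.r.t. $g$);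 umbilical point: $h^a_b=0$. Specializing $A_1$ to the harmonic pole $A_1-\lambda A_0$ gives $\lambda=0$ and $\omega^0_1=\mu\omega^1+\mu_a\omega^a$ with $\mu=\frac1{n-2}h^a_bh^b_a$; then $d\mu+2\mu(\omega^0_0-\omega^1_1)=\nu\omega^1+\nu_a\omega^a$ defines $\nu$. Define $H^a_b=h^a_ch^c_b+\frac{\nu}{2\mu}h^a_b-\mu\delta^a_b$. "Relative tensor of weight 2" means $\nabla_\delta H^a_b=2H^a_b(\pi^1_1-\pi^0_0)$ under changes of the adapted frame at a fixed point. *)

theory Defs
  imports "HOL-Analysis.Analysis"
begin

text \<open>Pointwise (algebraic) model at a point x of the lightlike hypersurface V of
  an n-manifold.  The index a ranges over the finite type 'm with CARD('m) = n - 2.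
  A matrix M stands for the mixed tensor M^a_b with M $ a $ b = M^a_b; the metric
  g $ a $ b = g_ab = (A_a, A_b); lam $ a $ b = lambda_ab (second fundamental form,
  omega^n_a = lambda_ab omega^b).\<close>

definition pos_def_sym :: "real^'m^'m \<Rightarrow> bool" where
  "pos_def_sym g \<longleftrightarrow> transpose g = g \<and> (\<forall>x. x \<noteq> 0 \<longrightarrow> x \<bullet> (g *v x) > 0)"

definition raise_idx :: "real^'m^'m \<Rightarrow> real^'m^'m \<Rightarrow> real^'m^'m" where
  "raise_idx g lam = matrix_inv g ** lam"

definition mean_curv :: "real^'m^'m \<Rightarrow> real^'m^'m \<Rightarrow> real" where
  "mean_curv g lam = trace (raise_idx g lam) / real CARD('m)"

definition burali_forti :: "real^'m^'m \<Rightarrow> real^'m^'m \<Rightarrow> real^'m^'m" where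
  "burali_forti g lam = raise_idx g lam - mean_curv g lam *\<^sub>R mat 1"

definition mu_of :: "real^'m^'m \<Rightarrow> real" where
  "mu_of h = trace (h ** h) / real CARD('m)"

definition H_aff :: "real^'m^'m \<Rightarrow> real \<Rightarrow> real^'m^'m" where
  "H_aff h \<nu> = h ** h + (\<nu> / (2 * mu_of h)) *\<^sub>R h - mu_of h *\<^sub>R mat 1"

definition diag_mat :: "('m \<Rightarrow> real) \<Rightarrow> real^'m^'m" where
  "diag_mat e = (\<chi> i j. if i = j then e i else 0)"

text \<open>Change of adapted frame at a fixed point: A_a is replaced by A_b P^b_a and the
  pair (A_0, A_1) is rescaled so that the factor exp of (pi^1_1 - pi^0_0) equals s.\<close>
definition frame_change :: "real \<Rightarrow> nat \<Rightarrow> real^'m^'m \<Rightarrow> real^'m^'m \<Rightarrow> real^'m^'m" where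
  "frame_change s w P T = (s ^ w) *\<^sub>R (matrix_inv P ** T ** P)"

end

theory Submission imports Defs begin

lemma minv: fixes A :: "real^'n^'n" assumes "invertible A"
  shows "A ** matrix_inv A = mat 1" "matrix_inv A ** A = mat 1"
  using someI_ex[OF assms[unfolded invertible_def]] unfolding matrix_inv_def by auto

lemma mm_add_r: "((A::real^'n^'n) + B) ** C = A ** C + B ** C"
  by (simp add: matrix_matrix_mult_def vec_eq_iff sum.distrib algebra_simps)
lemma mm_sub_r: "((A::real^'n^'n) - B) ** C = A ** C - B ** C"
  by (simp add: matrix_matrix_mult_def vec_eq_iff sum_subtractf algebra_simps)
lemma mm_sub_l: "(C::real^'n^'n) ** (A - B) = C ** A - C ** B"
  by (simp add: matrix_matrix_mult_def vec_eq_iff sum_subtractf algebra_simps)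

lemma tr_scale: "trace (c *\<^sub>R (A::real^'n^'n)) = c * trace A"
  by (simp add: trace_def sum_distrib_left)

lemma sim_trace: fixes P A :: "real^'n^'n" assumes "invertible P"
  shows "trace (matrix_inv P ** A ** P) = trace A"
  by (metis assms matrix_mul_assoc matrix_mul_lid minv(1) trace_mul_sym)

lemma frame_part:
  fixes h P :: "real^'n^'n" assumes s: "s \<noteq> 0" and P: "invertible P"
  shows "H_aff (frame_change s 1 P h) (s ^ 3 * \<nu>) = frame_change s 2 P (H_aff h \<nu>)"
proof -
  let ?Q = "matrix_inv P"
  have hh: "frame_change s 1 P h ** frame_change s 1 P h = s^2 *\<^sub>R (?Q ** (h ** h) ** P)"
  proof -
    have "(?Q ** h ** P) ** (?Q ** h ** P) = ?Q ** h ** (P ** ?Q) ** h ** P"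
      by (simp add: matrix_mul_assoc)
    also have "\<dots> = ?Q ** (h ** h) ** P" using minv[OF P] by (simp add: matrix_mul_assoc)
    finally show ?thesis unfolding frame_change_def
      by (simp add: matrix_scalar_ac scalar_matrix_assoc[symmetric] power2_eq_square)
  qed
  have mu: "mu_of (frame_change s 1 P h) = s^2 * mu_of h"
    unfolding mu_of_def hh tr_scale sim_trace[OF P] by simp
  have coef: "s ^ 3 * \<nu> / (2 * (s^2 * mu_of h)) * s = s^2 * (\<nu> / (2 * mu_of h))"
    using s by (cases "mu_of h = 0") (simp_all add: field_simps power2_eq_square power3_eq_cube)
  have dist: "?Q ** (h ** h + c *\<^sub>R h - m *\<^sub>R mat 1) ** P = ?Q ** (h ** h) ** P + c *\<^sub>R (?Q ** h ** P) - m *\<^sub>R mat 1" for c m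
    using minv[OF P] by (simp add: matrix_add_ldistrib mm_add_r mm_sub_l mm_sub_r
       matrix_scalar_ac scalar_matrix_assoc[symmetric] matrix_mul_assoc)
  have "H_aff (frame_change s 1 P h) (s ^ 3 * \<nu>) = s^2 *\<^sub>R (?Q ** (h ** h) ** P)
     + (s ^ 3 * \<nu> / (2 * (s^2 * mu_of h)) * s) *\<^sub>R (?Q ** h ** P) - (s^2 * mu_of h) *\<^sub>R mat 1"
    unfolding H_aff_def mu hh by (simp add: frame_change_def)
  also have "\<dots> = frame_change s 2 P (H_aff h \<nu>)"
    unfolding coef frame_change_def H_aff_def dist by (simp add: algebra_simps)
  finally show ?thesis .
qed

lemma Bsym: fixes g :: "real^'n^'n" assumes "transpose g = g"
  shows "x \<bullet> (g *v y) = y \<bullet> (g *v x)"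
proof -
  have "x \<bullet> (g *v y) = (x v* g) \<bullet> y" by (simp add: dot_lmul_matrix)
  also have "x v* g = transpose g *v x" by simp
  finally show ?thesis using assms by (simp add: inner_commute)
qed

lemma quad0: fixes b c :: real assumes "\<forall>t. 2*t*b + t^2*c \<le> 0" shows "b = 0"
proof (rule ccontr)
  assume b: "b \<noteq> 0"
  define t where "t = b / (\<bar>c\<bar> + 1)"
  have d: "\<bar>c\<bar> + 1 > 0" by simp
  have e1: "t^2 * (-\<bar>c\<bar>) \<le> t^2*c" by (intro mult_left_mono) auto
  define a where "a = \<bar>c\<bar>"
  have a: "a + 1 > 0" unfolding a_def by simp
  have ta: "b = t*(a+1)" using a by (simp add: t_def a_def)
  have "(2*t*b - t^2*a) * (a+1)^2 = b^2*(a+2)"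
    unfolding ta by (simp add: algebra_simps power2_eq_square)
  then have e2: "2*t*b - t^2*\<bar>c\<bar> = b^2 * (\<bar>c\<bar> + 2) / (\<bar>c\<bar>+1)^2"
    using a unfolding a_def[symmetric] by (simp add: eq_divide_eq)
  have e3: "b^2 * (\<bar>c\<bar> + 2) / (\<bar>c\<bar>+1)^2 > 0" using b
    by (intro divide_pos_pos mult_pos_pos) auto
  have "2*t*b + t^2*c > 0" using e1 e2 e3 by linarith
  then show False using assms by (meson not_le)
qed

lemma eig_exists:
  fixes g A :: "real^'n^'n" and S :: "(real^'n) set"
  assumes gs: "transpose g = g" and gp: "\<forall>x. x \<noteq> 0 \<longrightarrow> x \<bullet> (g *v x) > 0"
    and sa: "\<forall>x y. (A *v x) \<bullet> (g *v y) = x \<bullet> (g *v (A *v y))"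
    and S: "subspace S" and inv: "\<forall>x\<in>S. A *v x \<in> S" and z: "z \<in> S" "z \<noteq> 0"
  shows "\<exists>x\<in>S. x \<noteq> 0 \<and> (\<exists>c. A *v x = c *\<^sub>R x)"
proof -
  define R where "R x = x \<bullet> (g *v (A *v x)) / (x \<bullet> (g *v x))" for x
  define K where "K = sphere (0::real^'n) 1 \<inter> S"
  have "compact K" unfolding K_def using closed_subspace[OF S] by (intro compact_Int_closed) auto
  moreover have "z /\<^sub>R norm z \<in> K" using z S unfolding K_def by (simp add: subspace_scale)
  then have "K \<noteq> {}" by blast
  moreover have "continuous_on K R"
  proof -
    have c1: "continuous_on K (\<lambda>x. g *v (A *v x))"
      unfolding matrix_vector_mul_assoc by (rule matrix_vector_mult_linear_continuous_on)
    have c2: "continuous_on K (\<lambda>x. g *v x)" by (rule matrix_vector_mult_linear_continuous_on)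
    have nz: "\<forall>x\<in>K. x \<bullet> (g *v x) \<noteq> 0"
    proof
      fix x assume "x \<in> K"
      then have "x \<noteq> 0" unfolding K_def by auto
      then show "x \<bullet> (g *v x) \<noteq> 0" using gp by (metis less_irrefl)
    qed
    have "continuous_on K (\<lambda>x. x \<bullet> (g *v (A *v x)) / (x \<bullet> (g *v x)))"
      by (rule continuous_on_divide[OF continuous_on_inner[OF continuous_on_id c1]
            continuous_on_inner[OF continuous_on_id c2] nz])
    then show ?thesis unfolding R_def by simp
  qed
  ultimately obtain x0 where x0: "x0 \<in> K" and mx: "\<forall>y\<in>K. R y \<le> R x0"
    using continuous_attains_sup by blast
  have x0S: "x0 \<in> S" and x0nz: "x0 \<noteq> 0" using x0 unfolding K_def by auto
  define M where "M = R x0"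
  have Rscale: "R (c *\<^sub>R y) = R y" if "c \<noteq> 0" for c y
    using that unfolding R_def by (simp add: matrix_vector_mult_scaleR power2_eq_square)
  have maxS: "R y \<le> M" if "y \<in> S" "y \<noteq> 0" for y
  proof -
    have "y /\<^sub>R norm y \<in> K" using that S unfolding K_def by (auto intro: subspace_scale)
    then have "R (y /\<^sub>R norm y) \<le> M" using mx M_def by blast
    then show ?thesis using Rscale[of "inverse (norm y)" y] that by simp
  qed
  define q0 where "q0 = x0 \<bullet> (g *v x0)"
  have q0: "q0 > 0" using gp x0nz q0_def by auto
  have Mq: "x0 \<bullet> (g *v (A *v x0)) = M * q0" using q0 unfolding M_def R_def q0_def by simp
  have key: "y \<bullet> (g *v (A *v x0)) = 0" if yS: "y \<in> S" and yo: "x0 \<bullet> (g *v y) = 0" for y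
  proof -
    define b where "b = y \<bullet> (g *v (A *v x0))"
    define c1 where "c1 = y \<bullet> (g *v (A *v y))"
    define d where "d = y \<bullet> (g *v y)"
    have yo': "y \<bullet> (g *v x0) = 0" using yo Bsym[OF gs] by metis
    have xAy: "x0 \<bullet> (g *v (A *v y)) = b" unfolding b_def
      using sa Bsym[OF gs] by metis
    have "2*t*b + t^2*(c1 - M*d) \<le> 0" for t
    proof -
      define w where "w = x0 + t *\<^sub>R y"
      have wS: "w \<in> S" unfolding w_def using S x0S yS by (simp add: subspace_add subspace_scale)
      have wg: "w \<bullet> (g *v w) = q0 + t^2 * d"
        unfolding w_def d_def q0_def using yo yo'
        by (simp add: algebra_simps matrix_vector_mult_scaleR inner_add_left inner_add_right power2_eq_square)
      have wA: "w \<bullet> (g *v (A *v w)) = M*q0 + 2*t*b + t^2*c1"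
        unfolding w_def c1_def using Mq xAy b_def
        by (simp add: algebra_simps matrix_vector_mult_scaleR inner_add_left inner_add_right power2_eq_square)
      have dnn: "d \<ge> 0" unfolding d_def using gp by (cases "y = 0") (auto intro: less_imp_le)
      have wpos: "w \<bullet> (g *v w) > 0" using wg q0 dnn by (simp add: add_pos_nonneg)
      then have "w \<noteq> 0" by auto
      then have "R w \<le> M" using maxS wS by blast
      then have "w \<bullet> (g *v (A *v w)) \<le> M * (w \<bullet> (g *v w))"
        using wpos unfolding R_def by (simp add: divide_le_eq)
      then show ?thesis unfolding wA wg by (simp add: algebra_simps)
    qed
    then show ?thesis using quad0 b_def by blast
  qed
  define w where "w = A *v x0 - M *\<^sub>R x0"
  have wS: "w \<in> S" unfolding w_def using inv x0S S by (simp add: subspace_diff subspace_scale)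
  have "x0 \<bullet> (g *v w) = 0" unfolding w_def using Mq q0_def
    by (simp add: algebra_simps matrix_vector_mult_scaleR)
  then have k1: "w \<bullet> (g *v (A *v x0)) = 0" and k2: "w \<bullet> (g *v x0) = 0"
    using key[OF wS] Bsym[OF gs] by metis+
  have "w \<bullet> (g *v w) = 0" using k1 k2 unfolding w_def
    by (simp add: algebra_simps matrix_vector_mult_scaleR inner_diff_right)
  then have "w = 0" using gp by (metis less_irrefl)
  then show ?thesis using x0S x0nz unfolding w_def by auto
qed


lemma gv_sum: "(g::real^'n^'n) *v sum f I = (\<Sum>i\<in>I. g *v f i)"
  using linear_sum[OF matrix_vector_mul_linear[of g], of f I] by (simp add: o_def)

lemma onb_nat:
  fixes g A :: "real^'n^'n"
  assumes gs: "transpose g = g" and gp: "\<forall>x. x \<noteq> 0 \<longrightarrow> x \<bullet> (g *v x) > 0"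
    and sa: "\<forall>x y. (A *v x) \<bullet> (g *v y) = x \<bullet> (g *v (A *v y))"
  shows "k \<le> CARD('n) \<Longrightarrow> \<exists>v e. (\<forall>i<k. \<forall>j<k. v i \<bullet> (g *v v j) = (if i = j then 1 else 0))
            \<and> (\<forall>i<k. A *v v i = e i *\<^sub>R v i)"
proof (induction k)
  case 0
  then show ?case by simp
next
  case (Suc k)
  then obtain v e where on: "\<forall>i<k. \<forall>j<k. v i \<bullet> (g *v v j) = (if i = j then 1 else 0)"
    and ev: "\<forall>i<k. A *v v i = e i *\<^sub>R v i" by auto
  define S where "S = {x. \<forall>i<k. v i \<bullet> (g *v x) = 0}"
  have sub: "subspace S" unfolding S_def subspace_def
    by (simp add: matrix_vector_right_distrib matrix_vector_mult_scaleR inner_add_right)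
  have inv: "\<forall>x\<in>S. A *v x \<in> S"
  proof
    fix x assume "x \<in> S"
    then show "A *v x \<in> S" unfolding S_def using ev sa
      by (auto simp: matrix_vector_mult_scaleR) (metis inner_scaleR_left mult_zero_right)
  qed
  have "span (v ` {..<k}) \<noteq> UNIV"
  proof
    assume "span (v ` {..<k}) = UNIV"
    then have "dim (UNIV :: (real^'n) set) \<le> card (v ` {..<k})"
      by (metis dim_le_card finite_imageI finite_lessThan order_refl)
    also have "\<dots> \<le> k" using card_image_le[of "{..<k}" v] by simp
    finally show False using Suc.prems by simp
  qed
  then obtain x where x: "x \<notin> span (v ` {..<k})" by blast
  define z where "z = x - (\<Sum>i<k. (v i \<bullet> (g *v x)) *\<^sub>R v i)"
  have zS: "z \<in> S"
  proof -
    have "v j \<bullet> (g *v z) = 0" if j: "j < k" for j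
    proof -
      have "v j \<bullet> (g *v z) = v j \<bullet> (g *v x) - (\<Sum>i<k. (v i \<bullet> (g *v x)) * (v j \<bullet> (g *v v i)))"
        unfolding z_def by (simp add: matrix_vector_mult_diff_distrib gv_sum inner_diff_right inner_sum_right
           matrix_vector_mult_scaleR)
      also have "(\<Sum>i<k. (v i \<bullet> (g *v x)) * (v j \<bullet> (g *v v i))) = v j \<bullet> (g *v x)"
      proof -
        have "(\<Sum>i<k. (v i \<bullet> (g *v x)) * (v j \<bullet> (g *v v i))) = (\<Sum>i<k. if i = j then v i \<bullet> (g *v x) else 0)"
          by (rule sum.cong) (use on j in auto)
        also have "\<dots> = v j \<bullet> (g *v x)" using j by simp
        finally show ?thesis .
      qed
      finally show ?thesis by simp
    qed
    then show ?thesis unfolding S_def by simp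
  qed
  have znz: "z \<noteq> 0"
  proof
    assume "z = 0"
    then have "x = (\<Sum>i<k. (v i \<bullet> (g *v x)) *\<^sub>R v i)" unfolding z_def by simp
    also have "\<dots> \<in> span (v ` {..<k})" by (intro span_sum span_scale span_base) auto
    finally show False using x by simp
  qed
  obtain y c where yS: "y \<in> S" and ynz: "y \<noteq> 0" and yev: "A *v y = c *\<^sub>R y"
    using eig_exists[OF gs gp sa sub inv zS znz] by blast
  define q where "q = y \<bullet> (g *v y)"
  have q: "q > 0" using gp ynz q_def by auto
  define u where "u = (1 / sqrt q) *\<^sub>R y"
  have uu: "u \<bullet> (g *v u) = 1" unfolding u_def using q
    by (simp add: matrix_vector_mult_scaleR q_def[symmetric] power2_eq_square[symmetric])
  have uev: "A *v u = c *\<^sub>R u" unfolding u_def by (simp add: matrix_vector_mult_scaleR yev)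
  have uS: "v i \<bullet> (g *v u) = 0" if "i < k" for i
    using yS that unfolding S_def u_def by (simp add: matrix_vector_mult_scaleR)
  have uS': "u \<bullet> (g *v v i) = 0" if "i < k" for i
    using uS[OF that] Bsym[OF gs] by metis
  show ?case
    apply (rule exI[of _ "v(k := u)"], rule exI[of _ "e(k := c)"])
    using on ev uu uev uS uS' by (auto simp: less_Suc_eq)
qed

lemma spectral:
  fixes g A :: "real^'n^'n"
  assumes gs: "transpose g = g" and gp: "\<forall>x. x \<noteq> 0 \<longrightarrow> x \<bullet> (g *v x) > 0"
    and sa: "\<forall>x y. (A *v x) \<bullet> (g *v y) = x \<bullet> (g *v (A *v y))"
  shows "\<exists>(w::'n \<Rightarrow> real^'n) e. (\<forall>a b. w a \<bullet> (g *v w b) = (if a = b then 1 else 0))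
            \<and> (\<forall>a. A *v w a = e a *\<^sub>R w a)"
proof -
  obtain v e where on: "\<forall>i<CARD('n). \<forall>j<CARD('n). v i \<bullet> (g *v v j) = (if i = j then 1 else 0)"
    and ev: "\<forall>i<CARD('n). A *v v i = e i *\<^sub>R v i"
    using onb_nat[OF gs gp sa, of "CARD('n)"] by auto
  obtain f where f: "bij_betw f (UNIV::'n set) {0..<CARD('n)}"
    using ex_bij_betw_finite_nat[of "UNIV::'n set"] by auto
  have fl: "f a < CARD('n)" for a using f by (auto simp: bij_betw_def)
  have fi: "f a = f b \<longleftrightarrow> a = b" for a b using f by (auto simp: bij_betw_def inj_on_def)
  show ?thesis
    apply (rule exI[of _ "\<lambda>a. v (f a)"], rule exI[of _ "\<lambda>a. e (f a)"])
    using on ev fl fi by auto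
qed


lemma conj_back: fixes P X :: "real^'n^'n" assumes "invertible P"
  shows "P ** (matrix_inv P ** X ** P) ** matrix_inv P = X"
proof -
  have "P ** (matrix_inv P ** X ** P) ** matrix_inv P = (P ** matrix_inv P) ** X ** (P ** matrix_inv P)"
    by (simp add: matrix_mul_assoc)
  then show ?thesis using minv[OF assms] by simp
qed

lemma dist_sim: fixes P h :: "real^'n^'n" assumes P: "invertible P"
  shows "matrix_inv P ** (h ** h + c *\<^sub>R h - m *\<^sub>R mat 1) ** P
     = (matrix_inv P ** h ** P) ** (matrix_inv P ** h ** P) + c *\<^sub>R (matrix_inv P ** h ** P) - m *\<^sub>R mat 1"
proof -
  have "(matrix_inv P ** h ** P) ** (matrix_inv P ** h ** P) = matrix_inv P ** h ** (P ** matrix_inv P) ** h ** P"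
    by (simp add: matrix_mul_assoc)
  also have "\<dots> = matrix_inv P ** (h ** h) ** P" using minv[OF P] by (simp add: matrix_mul_assoc)
  finally show ?thesis
    using minv[OF P] by (simp add: matrix_add_ldistrib mm_add_r mm_sub_l mm_sub_r
       matrix_scalar_ac scalar_matrix_assoc[symmetric] matrix_mul_assoc)
qed

lemma diag_mult: "diag_mat e ** diag_mat f = diag_mat (\<lambda>a. e a * f a)"
proof -
  have "(\<Sum>k\<in>UNIV. (if i = k then e i else 0) * (if k = j then f k else 0)) = (if i = j then e i * f i else 0)" for i j
  proof -
    have "(\<Sum>k\<in>UNIV. (if i = k then e i else 0) * (if k = j then f k else 0))
       = (\<Sum>k\<in>UNIV. if k = i then (if i = j then e i * f i else 0) else 0)" by (rule sum.cong) auto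
    then show ?thesis by simp
  qed
  then show ?thesis by (simp add: diag_mat_def matrix_matrix_mult_def vec_eq_iff)
qed

lemma diag_comb: "diag_mat (\<lambda>a. (e a)\<^sup>2 + c * e a - m) = diag_mat e ** diag_mat e + c *\<^sub>R diag_mat e - m *\<^sub>R mat 1"
  unfolding diag_mult by (simp add: diag_mat_def mat_def vec_eq_iff power2_eq_square)

lemma trace_diag: "trace (diag_mat e) = sum e UNIV"
  by (simp add: trace_def diag_mat_def)

lemma diagonalize:
  fixes g h :: "real^'n^'n"
  assumes gs: "transpose g = g" and gp: "\<forall>x. x \<noteq> 0 \<longrightarrow> x \<bullet> (g *v x) > 0"
    and sa: "\<forall>x y. (h *v x) \<bullet> (g *v y) = x \<bullet> (g *v (h *v y))"
  shows "\<exists>(P::real^'n^'n) e. invertible P \<and> transpose P ** g ** P = mat 1 \<and> matrix_inv P ** h ** P = diag_mat e"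
proof -
  obtain w :: "'n \<Rightarrow> real^'n" and e where on: "\<forall>a b. w a \<bullet> (g *v w b) = (if a = b then 1 else 0)"
    and ev: "\<forall>a. h *v w a = e a *\<^sub>R w a"
    using spectral[OF gs gp sa] by auto
  define P :: "real^'n^'n" where "P = (\<chi> i j. w j $ i)"
  have 1: "transpose P ** g ** P = mat 1"
  proof -
    have "(transpose P ** (g ** P)) $ a $ b = w a \<bullet> (g *v w b)" for a b
      by (simp add: P_def matrix_matrix_mult_def transpose_def matrix_vector_mult_def inner_vec_def)
    then show ?thesis using on by (simp add: vec_eq_iff mat_def matrix_mul_assoc[symmetric])
  qed
  have 2: "h ** P = P ** diag_mat e"
  proof -
    have "(h ** P) $ i $ b = (h *v w b) $ i" for i b
      by (simp add: P_def matrix_matrix_mult_def matrix_vector_mult_def)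
    moreover have "(P ** diag_mat e) $ i $ b = e b * w b $ i" for i b
      by (simp add: P_def matrix_matrix_mult_def diag_mat_def if_distrib cong: if_cong)
    ultimately show ?thesis using ev by (simp add: vec_eq_iff)
  qed
  have Pi: "invertible P" unfolding invertible_left_inverse using 1 by (metis matrix_mul_assoc)
  have "matrix_inv P ** h ** P = diag_mat e"
    using minv[OF Pi] by (simp add: matrix_mul_assoc[symmetric] 2) (simp add: matrix_mul_assoc)
  then show ?thesis using Pi 1 by blast
qed


theorem mainTheorem14:
  fixes g lam :: "real^'m^'m" and \<nu> :: real
  assumes g_pd: "pos_def_sym g"
    and lam_sym: "transpose lam = lam"
    and no_umbilic: "burali_forti g lam \<noteq> 0"
  defines "h \<equiv> burali_forti g lam"
    and "\<mu> \<equiv> mu_of (burali_forti g lam)"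
    and "H \<equiv> H_aff (burali_forti g lam) \<nu>"
  shows
    "(CARD('m) = 2 \<longrightarrow> H = (\<nu> / (2 * \<mu>)) *\<^sub>R h \<and> (H = 0 \<longleftrightarrow> h = 0 \<or> \<nu> = 0))
     \<and> (CARD('m) \<ge> 2 \<longrightarrow>
          trace H = 0
        \<and> (\<forall>s P. s \<noteq> 0 \<and> invertible P \<longrightarrow>
              H_aff (frame_change s 1 P h) (s ^ 3 * \<nu>) = frame_change s 2 P H)
        \<and> (\<exists>(P::real^'m^'m) e. invertible P \<and> transpose P ** g ** P = mat 1
              \<and> matrix_inv P ** h ** P = diag_mat e
              \<and> matrix_inv P ** H ** P
                  = diag_mat (\<lambda>a. (e a)\<^sup>2 + (\<nu> / (2 * \<mu>)) * e a - \<mu>)))"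
proof -
  have gs: "transpose g = g" and gp: "\<forall>x. x \<noteq> 0 \<longrightarrow> x \<bullet> (g *v x) > 0"
    using g_pd unfolding pos_def_sym_def by auto
  have gi: "invertible g" unfolding invertible_left_inverse matrix_left_invertible_ker
    using gp by (metis inner_zero_right less_irrefl)
  define m where "m = mean_curv g lam"
  have hdef: "h = matrix_inv g ** lam - m *\<^sub>R mat 1"
    unfolding h_def burali_forti_def raise_idx_def m_def ..
  have gh: "g ** h = lam - m *\<^sub>R g"
    unfolding hdef mm_sub_l matrix_scalar_ac matrix_mul_assoc minv(1)[OF gi] by simp
  have th: "transpose h ** g = g ** h"
  proof -
    have "transpose h ** g = transpose (g ** h)" using gs by (simp add: matrix_transpose_mul)
    also have "\<dots> = g ** h" unfolding gh using lam_sym gs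
      by (simp add: transpose_def vec_eq_iff)
    finally show ?thesis .
  qed
  have sa: "\<forall>x y. (h *v x) \<bullet> (g *v y) = x \<bullet> (g *v (h *v y))"
  proof (intro allI)
    fix x y
    have "(h *v x) \<bullet> (g *v y) = (x v* transpose h) \<bullet> (g *v y)" by simp
    also have "\<dots> = x \<bullet> (transpose h *v (g *v y))" by (rule dot_lmul_matrix)
    also have "\<dots> = x \<bullet> ((transpose h ** g) *v y)" by (simp only: matrix_vector_mul_assoc)
    also have "\<dots> = x \<bullet> (g *v (h *v y))" by (simp add: th matrix_vector_mul_assoc)
    finally show "(h *v x) \<bullet> (g *v y) = x \<bullet> (g *v (h *v y))" .
  qed
  obtain P :: "real^'m^'m" and e where Pi: "invertible P" and PgP: "transpose P ** g ** P = mat 1"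
    and D: "matrix_inv P ** h ** P = diag_mat e"
    using diagonalize[OF gs gp sa] by blast
  have Hdef: "H = h ** h + (\<nu> / (2 * \<mu>)) *\<^sub>R h - \<mu> *\<^sub>R mat 1"
    unfolding H_def H_aff_def \<mu>_def h_def ..
  have HD: "matrix_inv P ** H ** P = diag_mat (\<lambda>a. (e a)\<^sup>2 + (\<nu> / (2 * \<mu>)) * e a - \<mu>)"
    unfolding Hdef dist_sim[OF Pi] D diag_comb ..
  have cardpos: "real CARD('m) > 0" by simp
  have trh: "trace h = 0"
    unfolding hdef trace_sub tr_scale trace_I m_def mean_curv_def raise_idx_def using cardpos by simp
  have trhh: "trace (h ** h) = real CARD('m) * \<mu>"
    unfolding \<mu>_def mu_of_def h_def[symmetric] using cardpos by simp
  have trH: "trace H = 0" unfolding Hdef trace_sub trace_add tr_scale trace_I trh trhh by simp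
  have trhhe: "trace (h ** h) = (\<Sum>a\<in>UNIV. (e a)\<^sup>2)"
  proof -
    have "trace (h ** h) = trace (matrix_inv P ** (h ** h) ** P)" using sim_trace[OF Pi] by simp
    also have "\<dots> = trace (diag_mat e ** diag_mat e)"
      using dist_sim[OF Pi, of h 0 0] D by simp
    finally show ?thesis by (simp add: diag_mult trace_diag power2_eq_square)
  qed
  have enz: "\<exists>a. e a \<noteq> 0"
  proof (rule ccontr)
    assume "\<not> ?thesis"
    then have "diag_mat e = 0" by (simp add: diag_mat_def vec_eq_iff)
    then have "h = 0" using conj_back[OF Pi, of h] D by simp
    then show False using no_umbilic h_def by simp
  qed
  have mupos: "\<mu> > 0"
  proof -
    obtain a where a: "e a \<noteq> 0" using enz by blast
    have "0 < (e a)\<^sup>2" using a by simp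
    also have "\<dots> \<le> (\<Sum>a\<in>UNIV. (e a)\<^sup>2)" by (rule member_le_sum) auto
    finally have "trace (h ** h) > 0" using trhhe by simp
    then show ?thesis using trhh cardpos by (simp add: zero_less_mult_iff)
  qed
  have part2: "CARD('m) = 2 \<longrightarrow> H = (\<nu> / (2 * \<mu>)) *\<^sub>R h \<and> (H = 0 \<longleftrightarrow> h = 0 \<or> \<nu> = 0)"
  proof
    assume c2: "CARD('m) = 2"
    then obtain a b :: 'm where ab: "a \<noteq> b" "UNIV = {a, b}" by (metis card_2_iff)
    have "trace (diag_mat e) = 0" using sim_trace[OF Pi, of h] D trh by simp
    moreover have "sum f (UNIV::'m set) = f a + f b" for f :: "'m \<Rightarrow> real"
      unfolding ab(2) using ab(1) by simp
    ultimately have eb: "e b = - e a" by (simp add: trace_diag)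
    have "real CARD('m) * \<mu> = (e a)\<^sup>2 + (e b)\<^sup>2" using trhh trhhe \<open>sum _ UNIV = _ + _\<close> by simp
    then have mue: "\<mu> = (e a)\<^sup>2" using c2 eb by simp
    have sq: "(e x)\<^sup>2 = \<mu>" for x using ab eb mue by (cases "x = a") auto
    have "matrix_inv P ** H ** P = matrix_inv P ** ((\<nu> / (2 * \<mu>)) *\<^sub>R h) ** P"
      unfolding HD using D sq by (simp add: diag_mat_def vec_eq_iff matrix_scalar_ac scalar_matrix_assoc[symmetric])
    then have Hh: "H = (\<nu> / (2 * \<mu>)) *\<^sub>R h"
      by (metis conj_back[OF Pi])
    show "H = (\<nu> / (2 * \<mu>)) *\<^sub>R h \<and> (H = 0 \<longleftrightarrow> h = 0 \<or> \<nu> = 0)"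
      using Hh mupos by auto
  qed
  have fc: "\<forall>s Q. s \<noteq> 0 \<and> invertible Q \<longrightarrow> H_aff (frame_change s 1 Q h) (s^3*\<nu>) = frame_change s 2 Q H"
    unfolding H_def h_def using frame_part by blast
  have ex: "\<exists>(P'::real^'m^'m) e'. invertible P' \<and> transpose P' ** g ** P' = mat 1
              \<and> matrix_inv P' ** h ** P' = diag_mat e'
              \<and> matrix_inv P' ** H ** P'
                  = diag_mat (\<lambda>a. (e' a)\<^sup>2 + (\<nu> / (2 * \<mu>)) * e' a - \<mu>)"
    using Pi PgP D HD by blast
  show ?thesis using part2 trH fc ex by blast
qed

end
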